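(* Fix $p\in[1,\infty]$ and write $\|\cdot\|$ for the induced $\ell_p$ operator norm of matrices. Let $W^{(l)}\in\mathbb{R}^{n_l\times n_{l-1}}$ for $l=1,\dots,L$ and let $0\le\alpha^{(l)}\le\beta^{(l)}$ (elementwise) be vectors in $\mathbb{R}^{n_l}$ for $l=1,\dots,L-1$ (the slope bounds of the activations of an $L$-layer network $z^{(l)}=W^{(l)}a^{(l-1)}$, $a^{(l)}=\sigma^{(l)}(z^{(l)})$, $f=z^{(L)}$). Given loop-transformation vectors $d^{(l)}\in\mathbb{R}^{n_l}$, $l=1,\dots,L-1$, set $D^{(l)}=\mathrm{diag}(d^{(l)})$, $D'^{(l)}=\mathrm{diag}(\beta^{(l)}-d^{(l)})$ for $l\le L-1$, $D'^{(L)}=I$, and define $m^{(1)}=\|D'^{(1)}W^{(1)}\|$ and for $l=2,\dots,L$ $$m^{(l)}=\Big\|D'^{(l)}W^{(l)}\prod_{i=1}^{l-1}D^{(i)}W^{(i)}\Big\|+\sum_{j=1}^{l-1}\Big\|D'^{(l)}W^{(l)}\prod_{i=j+1}^{l-1}D^{(i)}W^{(i)}\Big\|\,m^{(j)}$$ (products ordered with the highest index on the left; empty product is the identity). Let $m^{(L)}(\mathcal{D})$ denote $m^{(L)}$ obtained with $d^{(l)}=\beta^{(l)}/2$ for all $l=1,\dots,L-1$, and $m^{(L)}(0)$ denote $m^{(L)}$ obtained with $d^{(l)}=0$ for all $l$ (the naive bound). Then $m^{(L)}(\mathcal{D})\le m^{(L)}(0)$. *)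

theory Defs
  imports "HOL-Library.Extended_Real" "Jordan_Normal_Form.Matrix"
begin

definition lp_norm :: "ereal \<Rightarrow> real vec \<Rightarrow> real" where
  "lp_norm p x =
     (if p = \<infinity> then Max ({0} \<union> {\<bar>x $ i\<bar> | i. i < dim_vec x})
      else (\<Sum>i<dim_vec x. \<bar>x $ i\<bar> powr real_of_ereal p) powr (1 / real_of_ereal p))"

definition op_norm :: "ereal \<Rightarrow> real mat \<Rightarrow> real" where
  "op_norm p A = Sup {lp_norm p (A *\<^sub>v x) | x. x \<in> carrier_vec (dim_col A) \<and> lp_norm p x \<le> 1}"

definition diag_of_vec :: "real vec \<Rightarrow> real mat" where
  "diag_of_vec v = mat (dim_vec v) (dim_vec v) (\<lambda>(i, j). if i = j then v $ i else 0)"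

text \<open>chain n D W j k = D(k) W(k) D(k-1) W(k-1) ... D(j+1) W(j+1)
  (highest index on the left); the identity of size n j when the product is empty.\<close>
fun chain :: "(nat \<Rightarrow> nat) \<Rightarrow> (nat \<Rightarrow> real mat) \<Rightarrow> (nat \<Rightarrow> real mat) \<Rightarrow> nat \<Rightarrow> nat \<Rightarrow> real mat" where
  "chain n D W j 0 = 1\<^sub>m (n j)"
| "chain n D W j (Suc k) =
     (if Suc k \<le> j then 1\<^sub>m (n j) else D (Suc k) * W (Suc k) * chain n D W j k)"

definition Dprime :: "(nat \<Rightarrow> nat) \<Rightarrow> nat \<Rightarrow> (nat \<Rightarrow> real vec) \<Rightarrow> (nat \<Rightarrow> real vec) \<Rightarrow> nat \<Rightarrow> real mat" where
  "Dprime n L beta d l = (if l = L then 1\<^sub>m (n L) else diag_of_vec (beta l - d l))"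

function mbound :: "ereal \<Rightarrow> (nat \<Rightarrow> nat) \<Rightarrow> nat \<Rightarrow> (nat \<Rightarrow> real mat) \<Rightarrow> (nat \<Rightarrow> real vec)
                    \<Rightarrow> (nat \<Rightarrow> real vec) \<Rightarrow> nat \<Rightarrow> real" where
  "mbound p n L W beta d l =
     (if l = 0 then 0 else
        op_norm p (Dprime n L beta d l * W l * chain n (\<lambda>i. diag_of_vec (d i)) W 0 (l - 1))
      + (\<Sum>j\<in>{1..<l}. op_norm p (Dprime n L beta d l * W l * chain n (\<lambda>i. diag_of_vec (d i)) W j (l - 1))
                        * mbound p n L W beta d j))"
  by pat_completeness auto
termination by (relation "measure (\<lambda>(p, n, L, W, beta, d, l). l)") auto

end

theory Submission imports Defs begin

lemma p_cases: assumes "1 \<le> (p::ereal)"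
  obtains "p = \<infinity>" | r where "p = ereal r" "r \<ge> 1"
  using assms by (cases p) auto

lemma finite_absset: "finite {\<bar>x $ i\<bar> | i. i < n}"
  by (rule finite_image_set) simp

lemma lp_norm_nonneg: assumes "1 \<le> p" shows "0 \<le> lp_norm p x"
proof (cases "p = \<infinity>")
  case True
  then show ?thesis unfolding lp_norm_def
    by (simp add: finite_absset Max_ge_iff)
next
  case False
  then show ?thesis unfolding lp_norm_def by simp
qed

lemma lp_norm_coord: assumes "1 \<le> p" "i < dim_vec x" shows "\<bar>x $ i\<bar> \<le> lp_norm p x"
  using assms(1)
proof (cases rule: p_cases)
  case 1
  then show ?thesis unfolding lp_norm_def using assms(2)
    by (simp add: finite_absset Max_ge_iff) blast
next
  case (2 r)
  have le: "\<bar>x $ i\<bar> powr r \<le> (\<Sum>i<dim_vec x. \<bar>x $ i\<bar> powr r)"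
    by (rule member_le_sum) (use assms(2) in auto)
  have "\<bar>x $ i\<bar> = (\<bar>x $ i\<bar> powr r) powr (1/r)"
    using 2 by (simp add: powr_powr)
  also have "\<dots> \<le> (\<Sum>i<dim_vec x. \<bar>x $ i\<bar> powr r) powr (1/r)"
    by (rule powr_mono2) (use le 2 in auto)
  finally show ?thesis unfolding lp_norm_def using 2 by simp
qed

lemma lp_norm_zero: assumes "1 \<le> p" shows "lp_norm p (0\<^sub>v n) = 0"
  using assms
proof (cases rule: p_cases)
  case 1
  have "{\<bar>(0\<^sub>v n :: real vec) $ i\<bar> | i. i < n} \<subseteq> {0}" by auto
  then have "{0} \<union> {\<bar>(0\<^sub>v n :: real vec) $ i\<bar> | i. i < n} = {0}" by blast
  have "lp_norm p (0\<^sub>v n) = Max ({0} \<union> {\<bar>(0\<^sub>v n :: real vec) $ i\<bar> | i. i < n})"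
    unfolding lp_norm_def 1 index_zero_vec(2) by (rule if_P) (rule refl)
  also have "\<dots> = 0" unfolding \<open>{0} \<union> _ = {0}\<close> by simp
  finally show ?thesis .
next
  case (2 r)
  then show ?thesis unfolding lp_norm_def by simp
qed

lemma lp_norm_smult: assumes "1 \<le> p" shows "lp_norm p (c \<cdot>\<^sub>v x) \<le> \<bar>c\<bar> * lp_norm p x"
  using assms
proof (cases rule: p_cases)
  case 1
  have M: "\<bar>x $ i\<bar> \<le> lp_norm p x" if "i < dim_vec x" for i
    using lp_norm_coord[OF assms that] .
  show ?thesis unfolding lp_norm_def using 1
    apply (simp add: finite_absset Max_le_iff)
    apply (intro conjI allI impI)
    using lp_norm_nonneg[OF assms, of x] 1 apply (simp add: lp_norm_def)
    using M 1 by (auto simp: lp_norm_def abs_mult intro!: mult_left_mono)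
next
  case (2 r)
  have "(\<Sum>i<dim_vec x. \<bar>(c \<cdot>\<^sub>v x) $ i\<bar> powr r) = \<bar>c\<bar> powr r * (\<Sum>i<dim_vec x. \<bar>x $ i\<bar> powr r)"
    by (simp add: sum_distrib_left abs_mult powr_mult)
  then have "lp_norm p (c \<cdot>\<^sub>v x) = (\<bar>c\<bar> powr r * (\<Sum>i<dim_vec x. \<bar>x $ i\<bar> powr r)) powr (1/r)"
    unfolding lp_norm_def using 2 by simp
  also have "\<dots> = \<bar>c\<bar> * lp_norm p x"
    unfolding lp_norm_def using 2 by (simp add: powr_mult powr_powr sum_nonneg)
  finally show ?thesis by simp
qed

lemma lp_norm_bound: assumes "1 \<le> p" "\<And>i. i < dim_vec y \<Longrightarrow> \<bar>y $ i\<bar> \<le> M" "0 \<le> M"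
  shows "lp_norm p y \<le> (real (dim_vec y) + 1) * M"
  using assms(1)
proof (cases rule: p_cases)
  case 1
  then show ?thesis unfolding lp_norm_def using assms(2,3)
    by (auto simp: finite_absset Max_le_iff intro: order_trans[OF _ mult_right_mono[of 1]])
next
  case (2 r)
  let ?n = "real (dim_vec y)"
  have "(\<Sum>i<dim_vec y. \<bar>y $ i\<bar> powr r) \<le> (\<Sum>i<dim_vec y. M powr r)"
    by (rule sum_mono, rule powr_mono2) (use assms 2 in auto)
  also have "\<dots> = ?n * M powr r" by simp
  also have "\<dots> \<le> (?n + 1) powr r * M powr r"
  proof (rule mult_right_mono)
    have "?n \<le> (?n + 1) powr 1" by simp
    also have "\<dots> \<le> (?n + 1) powr r" by (rule powr_mono) (use 2 in auto)
    finally show "?n \<le> (?n + 1) powr r" .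
  qed simp
  also have "\<dots> = ((?n + 1) * M) powr r" using assms(3) by (simp add: powr_mult)
  finally have le: "(\<Sum>i<dim_vec y. \<bar>y $ i\<bar> powr r) \<le> ((?n + 1) * M) powr r" .
  have "lp_norm p y \<le> (((?n + 1) * M) powr r) powr (1/r)"
    unfolding lp_norm_def using 2 by (auto intro!: powr_mono2 le sum_nonneg)
  also have "\<dots> = (?n + 1) * M" using 2 assms(3) by (simp add: powr_powr)
  finally show ?thesis .
qed


lemma mult_mat_vec_zero': "A *\<^sub>v 0\<^sub>v (dim_col A) = (0\<^sub>v (dim_row A) :: real vec)"
  by (intro eq_vecI) (auto simp: scalar_prod_def)

lemma smult_mat_mult_vec: "x \<in> carrier_vec (dim_col A) \<Longrightarrow> (c \<cdot>\<^sub>m A) *\<^sub>v (x :: real vec) = c \<cdot>\<^sub>v (A *\<^sub>v x)"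
  by (intro eq_vecI) (auto simp: scalar_prod_def sum_distrib_left intro!: sum.cong)

lemma op_norm_bdd: assumes "1 \<le> p"
  shows "bdd_above {lp_norm p (A *\<^sub>v x) | x. x \<in> carrier_vec (dim_col A) \<and> lp_norm p x \<le> 1}"
proof -
  define C where "C = (\<Sum>i<dim_row A. \<Sum>k<dim_col A. \<bar>A $$ (i, k)\<bar>)"
  have C0: "0 \<le> C" unfolding C_def by (auto intro!: sum_nonneg)
  have "lp_norm p (A *\<^sub>v x) \<le> (real (dim_vec (A *\<^sub>v x)) + 1) * C"
    if x: "x \<in> carrier_vec (dim_col A)" "lp_norm p x \<le> 1" for x
  proof (rule lp_norm_bound[OF assms _ C0])
    fix i assume i: "i < dim_vec (A *\<^sub>v x)"
    then have i': "i < dim_row A" by simp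
    have "\<bar>(A *\<^sub>v x) $ i\<bar> = \<bar>\<Sum>k<dim_col A. A $$ (i, k) * x $ k\<bar>"
      using i' x by (simp add: scalar_prod_def row_def lessThan_atLeast0)
    also have "\<dots> \<le> (\<Sum>k<dim_col A. \<bar>A $$ (i, k)\<bar>)"
    proof -
      have "\<bar>\<Sum>k<dim_col A. A $$ (i, k) * x $ k\<bar> \<le> (\<Sum>k<dim_col A. \<bar>A $$ (i, k) * x $ k\<bar>)"
        by (rule sum_abs)
      also have "\<dots> \<le> (\<Sum>k<dim_col A. \<bar>A $$ (i, k)\<bar>)"
      proof (rule sum_mono)
        fix k assume "k \<in> {..<dim_col A}"
        then have "\<bar>x $ k\<bar> \<le> 1" using lp_norm_coord[OF assms, of k x] x by auto
        then show "\<bar>A $$ (i, k) * x $ k\<bar> \<le> \<bar>A $$ (i, k)\<bar>"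
          by (simp add: abs_mult mult_left_le)
      qed
      finally show ?thesis .
    qed
    also have "\<dots> \<le> C" unfolding C_def
      by (rule member_le_sum[where f = "\<lambda>i. \<Sum>k<dim_col A. \<bar>A $$ (i, k)\<bar>"]) (use i' in \<open>auto intro: sum_nonneg\<close>)
    finally show "\<bar>(A *\<^sub>v x) $ i\<bar> \<le> C" .
  qed
  then show ?thesis unfolding bdd_above_def by (auto intro!: exI[of _ "(real (dim_row A) + 1) * C"])
qed

lemma op_norm_ne: "{lp_norm p (A *\<^sub>v x) | x. x \<in> carrier_vec (dim_col A) \<and> lp_norm p x \<le> 1} \<noteq> {}"
  if "1 \<le> p"
  using that lp_norm_zero[OF that, of "dim_col A"] by (auto intro!: exI[of _ "0\<^sub>v (dim_col A)"])

lemma op_norm_upper: assumes "1 \<le> p" "x \<in> carrier_vec (dim_col A)" "lp_norm p x \<le> 1"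
  shows "lp_norm p (A *\<^sub>v x) \<le> op_norm p A"
  unfolding op_norm_def by (rule cSup_upper[OF _ op_norm_bdd[OF assms(1)]]) (use assms in auto)

lemma op_norm_nonneg: assumes "1 \<le> p" shows "0 \<le> op_norm p A"
proof -
  have "lp_norm p (A *\<^sub>v 0\<^sub>v (dim_col A)) \<le> op_norm p A"
    by (rule op_norm_upper[OF assms]) (use lp_norm_zero[OF assms] in auto)
  then show ?thesis unfolding mult_mat_vec_zero' lp_norm_zero[OF assms] .
qed

lemma op_norm_apply: assumes "1 \<le> p" "x \<in> carrier_vec (dim_col A)"
  shows "lp_norm p (A *\<^sub>v x) \<le> op_norm p A * lp_norm p x"
proof (cases "lp_norm p x = 0")
  case True
  have "x = 0\<^sub>v (dim_col A)"
  proof (rule eq_vecI)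
    fix i assume "i < dim_vec (0\<^sub>v (dim_col A) :: real vec)"
    then show "x $ i = 0\<^sub>v (dim_col A) $ i"
      using lp_norm_coord[OF assms(1), of i x] True assms(2) by auto
  qed (use assms(2) in auto)
  then show ?thesis using True by (simp add: mult_mat_vec_zero' lp_norm_zero[OF assms(1)])
next
  case False
  define r where "r = lp_norm p x"
  have r: "r > 0" using False lp_norm_nonneg[OF assms(1), of x] unfolding r_def by auto
  have y: "(1/r) \<cdot>\<^sub>v x \<in> carrier_vec (dim_col A)" using assms(2) by simp
  have "lp_norm p ((1/r) \<cdot>\<^sub>v x) \<le> \<bar>1/r\<bar> * r" using lp_norm_smult[OF assms(1), of "1/r" x] by (simp add: r_def[symmetric])
  also have "\<dots> = 1" using r by simp
  finally have "lp_norm p (A *\<^sub>v ((1/r) \<cdot>\<^sub>v x)) \<le> op_norm p A"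
    using op_norm_upper[OF assms(1) y] by simp
  then have le: "lp_norm p ((1/r) \<cdot>\<^sub>v (A *\<^sub>v x)) \<le> op_norm p A"
    using mult_mat_vec[OF _ assms(2), of A "dim_row A" "1/r"] by simp
  have "A *\<^sub>v x = r \<cdot>\<^sub>v ((1/r) \<cdot>\<^sub>v (A *\<^sub>v x))" using r by (auto simp: smult_smult_assoc)
  then have "lp_norm p (A *\<^sub>v x) \<le> \<bar>r\<bar> * lp_norm p ((1/r) \<cdot>\<^sub>v (A *\<^sub>v x))"
    using lp_norm_smult[OF assms(1)] by metis
  also have "\<dots> \<le> r * op_norm p A" using r le by simp
  finally show ?thesis unfolding r_def by (simp add: mult.commute)
qed

lemma op_norm_mult: assumes "1 \<le> p" "A \<in> carrier_mat n1 n2" "B \<in> carrier_mat n2 n3"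
  shows "op_norm p (A * B) \<le> op_norm p A * op_norm p B"
  unfolding op_norm_def[of p "A * B"]
proof (rule cSup_least[OF op_norm_ne[OF assms(1)]])
  fix y assume "y \<in> {lp_norm p (A * B *\<^sub>v x) | x. x \<in> carrier_vec (dim_col (A * B)) \<and> lp_norm p x \<le> 1}"
  then obtain x where x: "x \<in> carrier_vec n3" "lp_norm p x \<le> 1" and y: "y = lp_norm p (A * B *\<^sub>v x)"
    using assms by auto
  have "y = lp_norm p (A *\<^sub>v (B *\<^sub>v x))" using y assms x by simp
  also have "\<dots> \<le> op_norm p A * lp_norm p (B *\<^sub>v x)"
    by (rule op_norm_apply[OF assms(1)]) (use assms x in auto)
  also have "\<dots> \<le> op_norm p A * (op_norm p B * lp_norm p x)"
    by (rule mult_left_mono[OF op_norm_apply[OF assms(1)] op_norm_nonneg[OF assms(1)]]) (use assms x in auto)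
  also have "\<dots> \<le> op_norm p A * op_norm p B"
    using x op_norm_nonneg[OF assms(1), of A] op_norm_nonneg[OF assms(1), of B]
    by (intro mult_left_mono mult_left_le) auto
  finally show "y \<le> op_norm p A * op_norm p B" .
qed

lemma op_norm_one: assumes "1 \<le> p" shows "op_norm p (1\<^sub>m n) \<le> 1"
  unfolding op_norm_def by (rule cSup_least[OF op_norm_ne[OF assms]]) auto

lemma op_norm_smult2: assumes "1 \<le> p" "c > 0" shows "c * op_norm p A \<le> op_norm p (c \<cdot>\<^sub>m A)"
proof -
  have "op_norm p A \<le> op_norm p (c \<cdot>\<^sub>m A) / c"
    unfolding op_norm_def[of p A]
  proof (rule cSup_least[OF op_norm_ne[OF assms(1)]])
    fix y assume "y \<in> {lp_norm p (A *\<^sub>v x) | x. x \<in> carrier_vec (dim_col A) \<and> lp_norm p x \<le> 1}"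
    then obtain x where x: "x \<in> carrier_vec (dim_col A)" "lp_norm p x \<le> 1" and y: "y = lp_norm p (A *\<^sub>v x)"
      by auto
    have "A *\<^sub>v x = (1/c) \<cdot>\<^sub>v ((c \<cdot>\<^sub>m A) *\<^sub>v x)" using assms x by (simp add: smult_mat_mult_vec smult_smult_assoc)
    then have "y \<le> \<bar>1/c\<bar> * lp_norm p ((c \<cdot>\<^sub>m A) *\<^sub>v x)" using y lp_norm_smult[OF assms(1)] by metis
    also have "\<dots> \<le> (1/c) * op_norm p (c \<cdot>\<^sub>m A)"
      using assms op_norm_upper[OF assms(1), of x "c \<cdot>\<^sub>m A"] x by (simp add: divide_right_mono)
    finally show "y \<le> op_norm p (c \<cdot>\<^sub>m A) / c" by simp
  qed
  then show ?thesis using assms by (simp add: field_simps)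
qed


declare mbound.simps[simp del]

lemma diag_carrier: "diag_of_vec v \<in> carrier_mat (dim_vec v) (dim_vec v)"
  by (simp add: diag_of_vec_def)

lemma chain_id: "chain n D W j j = 1\<^sub>m (n j)"
  by (cases j) auto

lemma geo: "1 + (\<Sum>j\<in>{1..<Suc m}. (2::real) ^ (j - 1)) = 2 ^ m"
  by (induction m) auto

lemma prod_split: "j \<le> l \<Longrightarrow> prod f {1..l} = prod f {1..j} * prod f {Suc j..l}"
proof -
  assume "j \<le> l"
  then have "{1..l} = {1..j} \<union> {Suc j..l}" by auto
  then show ?thesis by (simp add: prod.union_disjoint[symmetric] ivl_disj_int)
qed

lemma mbound_nonneg: assumes "1 \<le> p" shows "0 \<le> mbound p n L W beta d l"
proof (induction l rule: less_induct)
  case (less l)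
  show ?case
    by (subst mbound.simps)
       (auto intro!: add_nonneg_nonneg sum_nonneg mult_nonneg_nonneg op_norm_nonneg[OF assms] less)
qed


theorem proposition1:
  fixes p :: ereal and L :: nat and n :: "nat \<Rightarrow> nat"
    and W :: "nat \<Rightarrow> real mat" and alpha beta :: "nat \<Rightarrow> real vec"
  assumes "1 \<le> p"
    and "L \<ge> 1"
    and "\<And>l. 1 \<le> l \<Longrightarrow> l \<le> L \<Longrightarrow> W l \<in> carrier_mat (n l) (n (l - 1))"
    and "\<And>l. 1 \<le> l \<Longrightarrow> l \<le> L - 1 \<Longrightarrow> alpha l \<in> carrier_vec (n l) \<and> beta l \<in> carrier_vec (n l)"
    and "\<And>l i. 1 \<le> l \<Longrightarrow> l \<le> L - 1 \<Longrightarrow> i < n l \<Longrightarrow> 0 \<le> alpha l $ i \<and> alpha l $ i \<le> beta l $ i"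
  shows "mbound p n L W beta (\<lambda>l. (1/2) \<cdot>\<^sub>v beta l) L \<le> mbound p n L W beta (\<lambda>l. 0\<^sub>v (n l)) L"
proof -
  note p1 = assms(1) and L1 = assms(2) and Wc = assms(3)
  have bc: "beta l \<in> carrier_vec (n l)" if "1 \<le> l" "l \<le> L - 1" for l using assms(4)[OF that] by blast
  define dh where "dh = (\<lambda>l. (1/2) \<cdot>\<^sub>v beta l)"
  define d0 where "d0 = (\<lambda>l. 0\<^sub>v (n l) :: real vec)"
  define N where "N = op_norm p"
  define B where "B = (\<lambda>l. Dprime n L beta dh l * W l)"
  define B0 where "B0 = (\<lambda>l. Dprime n L beta d0 l * W l)"
  define P where "P = (\<lambda>l. \<Prod>i\<in>{1..l}. N (B i))"
  have Nnn: "0 \<le> N A" for A unfolding N_def by (rule op_norm_nonneg[OF p1])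
  have Bc: "B l \<in> carrier_mat (n l) (n (l - 1))" if "1 \<le> l" "l \<le> L" for l
  proof (cases "l = L")
    case True then show ?thesis unfolding B_def Dprime_def using Wc[OF that] by auto
  next
    case False
    then have "l \<le> L - 1" using that by auto
    then have "dim_vec (beta l - dh l) = n l" using bc[OF that(1)] unfolding dh_def by auto
    then show ?thesis unfolding B_def Dprime_def using False Wc[OF that] diag_carrier[of "beta l - dh l"]
      by auto
  qed
  have B0c: "B0 l \<in> carrier_mat (n l) (n (l - 1))" if "1 \<le> l" "l \<le> L" for l
  proof (cases "l = L")
    case True then show ?thesis unfolding B0_def Dprime_def using Wc[OF that] by auto
  next
    case False
    then have "dim_vec (beta l - d0 l) = n l" unfolding d0_def by auto
    then show ?thesis unfolding B0_def Dprime_def using False Wc[OF that] diag_carrier[of "beta l - d0 l"]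
      by auto
  qed
  have BD: "B l = diag_of_vec (dh l) * W l" if "1 \<le> l" "l \<le> L - 1" for l
  proof -
    have "beta l - dh l = dh l"
      by (rule eq_vecI) (use bc[OF that] in \<open>auto simp: dh_def\<close>)
    then show ?thesis unfolding B_def Dprime_def using that L1 by auto
  qed
  have chain: "chain n (\<lambda>i. diag_of_vec (dh i)) W j k \<in> carrier_mat (n k) (n j)
      \<and> N (chain n (\<lambda>i. diag_of_vec (dh i)) W j k) \<le> (\<Prod>i\<in>{Suc j..k}. N (B i))"
    if "j \<le> k" "k \<le> L - 1" for j k
    using that
  proof (induction k)
    case 0
    then show ?case using op_norm_one[OF p1] unfolding N_def by simp
  next
    case (Suc k)
    show ?case
    proof (cases "Suc k \<le> j")
      case True
      then have "j = Suc k" using Suc by auto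
      then show ?thesis using op_norm_one[OF p1] unfolding N_def by simp
    next
      case False
      then have jk: "j \<le> k" by auto
      have IH: "chain n (\<lambda>i. diag_of_vec (dh i)) W j k \<in> carrier_mat (n k) (n j)"
        "N (chain n (\<lambda>i. diag_of_vec (dh i)) W j k) \<le> (\<Prod>i\<in>{Suc j..k}. N (B i))"
        using Suc jk by auto
      have eq: "chain n (\<lambda>i. diag_of_vec (dh i)) W j (Suc k) = B (Suc k) * chain n (\<lambda>i. diag_of_vec (dh i)) W j k"
        using False BD[of "Suc k"] Suc.prems by simp
      have BSc: "B (Suc k) \<in> carrier_mat (n (Suc k)) (n k)" using Bc[of "Suc k"] Suc.prems by auto
      have "N (chain n (\<lambda>i. diag_of_vec (dh i)) W j (Suc k)) \<le> N (B (Suc k)) * N (chain n (\<lambda>i. diag_of_vec (dh i)) W j k)"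
        unfolding eq N_def by (rule op_norm_mult[OF p1 BSc IH(1)])
      also have "\<dots> \<le> N (B (Suc k)) * (\<Prod>i\<in>{Suc j..k}. N (B i))"
        by (rule mult_left_mono[OF IH(2) Nnn])
      also have "\<dots> = (\<Prod>i\<in>{Suc j..Suc k}. N (B i))" using jk by (simp add: mult.commute)
      finally show ?thesis using eq BSc IH(1) by auto
    qed
  qed
  have termb: "N (B l * chain n (\<lambda>i. diag_of_vec (dh i)) W j (l - 1)) \<le> (\<Prod>i\<in>{Suc j..l}. N (B i))"
    if "j < l" "l \<le> L" for j l
  proof -
    have c: "chain n (\<lambda>i. diag_of_vec (dh i)) W j (l - 1) \<in> carrier_mat (n (l - 1)) (n j)"
      "N (chain n (\<lambda>i. diag_of_vec (dh i)) W j (l - 1)) \<le> (\<Prod>i\<in>{Suc j..l - 1}. N (B i))"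
      using chain[of j "l - 1"] that by auto
    have "N (B l * chain n (\<lambda>i. diag_of_vec (dh i)) W j (l - 1)) \<le> N (B l) * N (chain n (\<lambda>i. diag_of_vec (dh i)) W j (l - 1))"
      unfolding N_def by (rule op_norm_mult[OF p1 Bc c(1)]) (use that in auto)
    also have "\<dots> \<le> N (B l) * (\<Prod>i\<in>{Suc j..l - 1}. N (B i))"
      by (rule mult_left_mono[OF c(2) Nnn])
    also have "\<dots> = (\<Prod>i\<in>{Suc j..Suc (l - 1)}. N (B i))"
      by (subst prod.cl_ivl_Suc) (use that in \<open>simp add: mult.commute\<close>)
    also have "Suc (l - 1) = l" using that by simp
    finally show ?thesis .
  qed
  have half: "mbound p n L W beta dh l \<le> 2 ^ (l - 1) * P l" if "1 \<le> l" "l \<le> L" for l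
    using that
  proof (induction l rule: less_induct)
    case (less l)
    have "mbound p n L W beta dh l = N (B l * chain n (\<lambda>i. diag_of_vec (dh i)) W 0 (l - 1))
       + (\<Sum>j\<in>{1..<l}. N (B l * chain n (\<lambda>i. diag_of_vec (dh i)) W j (l - 1)) * mbound p n L W beta dh j)"
      by (subst mbound.simps) (use less.prems in \<open>simp add: N_def B_def\<close>)
    also have "\<dots> \<le> P l + (\<Sum>j\<in>{1..<l}. 2 ^ (j - 1) * P l)"
    proof (rule add_mono)
      show "N (B l * chain n (\<lambda>i. diag_of_vec (dh i)) W 0 (l - 1)) \<le> P l"
        using termb[of 0 l] less.prems unfolding P_def by auto
    next
      show "(\<Sum>j\<in>{1..<l}. N (B l * chain n (\<lambda>i. diag_of_vec (dh i)) W j (l - 1)) * mbound p n L W beta dh j)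
          \<le> (\<Sum>j\<in>{1..<l}. 2 ^ (j - 1) * P l)"
      proof (rule sum_mono)
        fix j assume j: "j \<in> {1..<l}"
        have "N (B l * chain n (\<lambda>i. diag_of_vec (dh i)) W j (l - 1)) * mbound p n L W beta dh j
            \<le> N (B l * chain n (\<lambda>i. diag_of_vec (dh i)) W j (l - 1)) * (2 ^ (j - 1) * P j)"
          by (rule mult_left_mono[OF less.IH Nnn]) (use j less.prems in auto)
        also have "\<dots> \<le> (\<Prod>i\<in>{Suc j..l}. N (B i)) * (2 ^ (j - 1) * P j)"
          by (rule mult_right_mono[OF termb]) (use j less.prems in \<open>auto simp: P_def intro!: prod_nonneg mult_nonneg_nonneg Nnn\<close>)
        also have "\<dots> = 2 ^ (j - 1) * P l"
          unfolding P_def using prod_split[of j l "\<lambda>i. N (B i)"] j by simp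
        finally show "N (B l * chain n (\<lambda>i. diag_of_vec (dh i)) W j (l - 1)) * mbound p n L W beta dh j
            \<le> 2 ^ (j - 1) * P l" .
      qed
    qed
    also have "\<dots> = P l * (1 + (\<Sum>j\<in>{1..<l}. 2 ^ (j - 1)))"
      by (simp add: sum_distrib_left algebra_simps)
    also have "1 + (\<Sum>j\<in>{1..<l}. (2::real) ^ (j - 1)) = 2 ^ (l - 1)"
      using geo[of "l - 1"] less.prems by simp
    finally show ?case by (simp add: mult.commute)
  qed
  have lower: "(\<Prod>i\<in>{1..l}. N (B0 i)) \<le> mbound p n L W beta d0 l" if "1 \<le> l" "l \<le> L" for l
    using that
  proof (induction l rule: less_induct)
    case (less l)
    have eq: "mbound p n L W beta d0 l = N (B0 l * chain n (\<lambda>i. diag_of_vec (d0 i)) W 0 (l - 1))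
       + (\<Sum>j\<in>{1..<l}. N (B0 l * chain n (\<lambda>i. diag_of_vec (d0 i)) W j (l - 1)) * mbound p n L W beta d0 j)"
      by (subst mbound.simps) (use less.prems in \<open>simp add: N_def B0_def\<close>)
    show ?case
    proof (cases "l = 1")
      case True
      have "B0 1 * 1\<^sub>m (n 0) = B0 1" using B0c[of 1] L1 by (simp add: right_mult_one_mat)
      then show ?thesis unfolding eq using True by simp
    next
      case False
      then have l2: "2 \<le> l" using less.prems by auto
      have mem: "l - 1 \<in> {1..<l}" using l2 by auto
      have "(\<Prod>i\<in>{1..l}. N (B0 i)) = N (B0 l) * (\<Prod>i\<in>{1..l - 1}. N (B0 i))"
        using prod.cl_ivl_Suc[of "\<lambda>i. N (B0 i)" 1 "l - 1"] l2 by (simp add: mult.commute)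
      also have "\<dots> \<le> N (B0 l) * mbound p n L W beta d0 (l - 1)"
        by (rule mult_left_mono[OF less.IH Nnn]) (use l2 less.prems in auto)
      also have "\<dots> = N (B0 l * chain n (\<lambda>i. diag_of_vec (d0 i)) W (l - 1) (l - 1)) * mbound p n L W beta d0 (l - 1)"
        using B0c[of l] less.prems by (simp add: chain_id right_mult_one_mat)
      also have "\<dots> \<le> (\<Sum>j\<in>{1..<l}. N (B0 l * chain n (\<lambda>i. diag_of_vec (d0 i)) W j (l - 1)) * mbound p n L W beta d0 j)"
        by (rule member_le_sum[OF mem])
           (auto intro!: mult_nonneg_nonneg Nnn mbound_nonneg[OF p1, unfolded N_def[symmetric]])
      also have "\<dots> \<le> mbound p n L W beta d0 l" unfolding eq by (simp add: Nnn)
      finally show ?thesis .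
    qed
  qed
  define f where "f = (\<lambda>i. if i = L then N (B i) else 2 * N (B i))"
  have fle: "0 \<le> f i \<and> f i \<le> N (B0 i)" if "i \<in> {1..L}" for i
  proof (cases "i = L")
    case True
    then show ?thesis unfolding f_def B_def B0_def Dprime_def by (simp add: Nnn)
  next
    case False
    then have i: "1 \<le> i" "i \<le> L - 1" using that by auto
    have "diag_of_vec (beta i - d0 i) = 2 \<cdot>\<^sub>m diag_of_vec (beta i - dh i)"
      by (rule eq_matI) (use bc[OF i] in \<open>auto simp: diag_of_vec_def d0_def dh_def\<close>)
    moreover have Dc: "diag_of_vec (beta i - dh i) \<in> carrier_mat (n i) (n i)"
      using diag_carrier[of "beta i - dh i"] bc[OF i] by (simp add: dh_def)
    moreover have "W i \<in> carrier_mat (n i) (n (i - 1))" using Wc[of i] i by auto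
    ultimately have "B0 i = 2 \<cdot>\<^sub>m B i"
      unfolding B0_def B_def Dprime_def using False
      by (simp add: mult_smult_assoc_mat)
    then show ?thesis unfolding f_def using False op_norm_smult2[OF p1, of 2 "B i"] Nnn
      by (simp add: N_def)
  qed
  have fprod: "(\<Prod>i\<in>{1..l}. f i) = 2 ^ l * P l" if "l < L" for l
    using that
  proof (induction l)
    case 0 then show ?case by (simp add: P_def)
  next
    case (Suc l)
    then show ?case by (simp add: P_def f_def)
  qed
  have "2 ^ (L - 1) * P L = (\<Prod>i\<in>{1..L}. f i)"
  proof -
    have "(\<Prod>i\<in>{1..L}. f i) = (\<Prod>i\<in>{1..L - 1}. f i) * f L"
      using prod.cl_ivl_Suc[of f 1 "L - 1"] L1 by simp
    also have "\<dots> = 2 ^ (L - 1) * P (L - 1) * N (B L)" using fprod[of "L - 1"] L1 by (simp add: f_def)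
    also have "\<dots> = 2 ^ (L - 1) * P L"
      using prod.cl_ivl_Suc[of "\<lambda>i. N (B i)" 1 "L - 1"] L1 by (simp add: P_def)
    finally show ?thesis by simp
  qed
  also have "\<dots> \<le> (\<Prod>i\<in>{1..L}. N (B0 i))" by (rule prod_mono) (use fle in blast)
  also have "\<dots> \<le> mbound p n L W beta d0 L" using lower[of L] L1 by simp
  finally have "mbound p n L W beta dh L \<le> mbound p n L W beta d0 L"
    using half[of L] L1 by simp
  then show ?thesis unfolding dh_def d0_def .
qed

end
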